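(* Let $P$ be a finite poset. For every $f\in\mathcal O(P)$ we have $\alpha_2(f)\in\mathcal C(P)$, $\alpha_3(\alpha_2(f))\in\tilde{\mathcal O}(P)$, and $$\rho_{\mathcal P}(f)=\alpha_1\bigl(\alpha_3(\alpha_2(f))\bigr),$$ i.e. $\rho_{\mathcal P}=\alpha_1\circ\alpha_3\circ\alpha_2$ on $\mathcal O(P)$.
   Context: For a finite poset $P$, let $\widehat P=P\cup\{\hat0,\hat1\}$ with $\hat0<x<\hat1$ for all $x\in P$, and write $y\lessdot x$ ($x$ covers $y$) when $y<x$ and no $z$ satisfies $y<z<x$. The order polytope $\mathcal O(P)$ is the set of order-preserving maps $f:P\to[0,1]$; each such $f$ is extended to $\hat f$ on $\widehat P$ by $\hat f(\hat0)=0$, $\hat f(\hat1)=1$. For $x\in P$ the piecewise-linear toggle $\tau_x:\mathcal O(P)\to\mathcal O(P)$ leaves $f(y)$ unchanged for $y\neq x$ and sets $(\tau_xf)(x)=\max\{\hat f(y):y\in\widehat P,\ y\lessdot x\}+\min\{\hat f(y):y\in\widehat P,\ y\gtrdot x\}-f(x)$. Piecewise-linear rowmotion is $\rho_{\mathcal P}=\tau_{x_1}\circ\cdots\circ\tau_{x_p}$ for any linear extension $x_1,\dots,x_p$ of $P$. The chain polytope $\mathcal C(P)$ is the set of maps $g:P\to[0,1]$ with $\sum_{x\in C}g(x)\le 1$ for every chain $C\subseteq P$. $\tilde{\mathcal O}(P)$ is the set of order-reversing maps $P\to[0,1]$. Define: $(\alpha_1 h)(x)=1-h(x)$ for $h\in\tilde{\mathcal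 O}(P)$; $(\alpha_2 f)(x)=\min\{\hat f(x)-\hat f(y): y\in\widehat P,\ y\lessdot x\}$ for $f\in\mathcal O(P)$; and $(\alpha_3 g)(x)=\max\{g(y_1)+\cdots+g(y_k): x=y_1\lessdot y_2\lessdot\cdots\lessdot y_k\lessdot\hat1,\ y_1,\dots,y_k\in P\}$ for $g\in\mathcal C(P)$. *)

theory Defs
  imports Complex_Main
begin

definition finite_poset :: "'a set \<Rightarrow> ('a \<Rightarrow> 'a \<Rightarrow> bool) \<Rightarrow> bool" where
  "finite_poset P le \<longleftrightarrow> finite P
     \<and> (\<forall>x\<in>P. le x x)
     \<and> (\<forall>x\<in>P. \<forall>y\<in>P. le x y \<and> le y x \<longrightarrow> x = y)
     \<and> (\<forall>x\<in>P. \<forall>y\<in>P. \<forall>z\<in>P. le x y \<and> le y z \<longrightarrow> le x z)"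

text \<open>The bounded extension hat P = P with a new bottom Zero and a new top One.\<close>
datatype 'a hatp = Zero | El 'a | One

definition hat_set :: "'a set \<Rightarrow> 'a hatp set" where
  "hat_set P = {Zero, One} \<union> El ` P"

fun hat_le :: "('a \<Rightarrow> 'a \<Rightarrow> bool) \<Rightarrow> 'a hatp \<Rightarrow> 'a hatp \<Rightarrow> bool" where
  "hat_le le Zero b = True"
| "hat_le le (El a) Zero = False"
| "hat_le le (El a) (El b) = le a b"
| "hat_le le (El a) One = True"
| "hat_le le One b = (b = One)"

definition hat_lt :: "('a \<Rightarrow> 'a \<Rightarrow> bool) \<Rightarrow> 'a hatp \<Rightarrow> 'a hatp \<Rightarrow> bool" where
  "hat_lt le a b \<longleftrightarrow> hat_le le a b \<and> a \<noteq> b"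

text \<open>hat_cov P le y x: x covers y in hat P.\<close>
definition hat_cov :: "'a set \<Rightarrow> ('a \<Rightarrow> 'a \<Rightarrow> bool) \<Rightarrow> 'a hatp \<Rightarrow> 'a hatp \<Rightarrow> bool" where
  "hat_cov P le y x \<longleftrightarrow> y \<in> hat_set P \<and> x \<in> hat_set P \<and> hat_lt le y x
      \<and> \<not> (\<exists>z\<in>hat_set P. hat_lt le y z \<and> hat_lt le z x)"

fun hatf :: "('a \<Rightarrow> real) \<Rightarrow> 'a hatp \<Rightarrow> real" where
  "hatf f Zero = 0"
| "hatf f (El a) = f a"
| "hatf f One = 1"

definition order_polytope :: "'a set \<Rightarrow> ('a \<Rightarrow> 'a \<Rightarrow> bool) \<Rightarrow> ('a \<Rightarrow> real) set" where
  "order_polytope P le = {f. (\<forall>x\<in>P. 0 \<le> f x \<and> f x \<le> 1)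
      \<and> (\<forall>x\<in>P. \<forall>y\<in>P. le x y \<longrightarrow> f x \<le> f y)}"

definition rev_order_polytope :: "'a set \<Rightarrow> ('a \<Rightarrow> 'a \<Rightarrow> bool) \<Rightarrow> ('a \<Rightarrow> real) set" where
  "rev_order_polytope P le = {f. (\<forall>x\<in>P. 0 \<le> f x \<and> f x \<le> 1)
      \<and> (\<forall>x\<in>P. \<forall>y\<in>P. le x y \<longrightarrow> f y \<le> f x)}"

definition is_chain :: "('a \<Rightarrow> 'a \<Rightarrow> bool) \<Rightarrow> 'a set \<Rightarrow> bool" where
  "is_chain le C \<longleftrightarrow> (\<forall>a\<in>C. \<forall>b\<in>C. le a b \<or> le b a)"

definition chain_polytope :: "'a set \<Rightarrow> ('a \<Rightarrow> 'a \<Rightarrow> bool) \<Rightarrow> ('a \<Rightarrow> real) set" where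
  "chain_polytope P le = {g. (\<forall>x\<in>P. 0 \<le> g x \<and> g x \<le> 1)
      \<and> (\<forall>C. C \<subseteq> P \<and> is_chain le C \<longrightarrow> sum g C \<le> 1)}"

definition toggle :: "'a set \<Rightarrow> ('a \<Rightarrow> 'a \<Rightarrow> bool) \<Rightarrow> 'a \<Rightarrow> ('a \<Rightarrow> real) \<Rightarrow> ('a \<Rightarrow> real)" where
  "toggle P le x f = f(x := Max {hatf f y | y. hat_cov P le y (El x)}
                          + Min {hatf f y | y. hat_cov P le (El x) y} - f x)"

definition linear_extension :: "'a set \<Rightarrow> ('a \<Rightarrow> 'a \<Rightarrow> bool) \<Rightarrow> 'a list \<Rightarrow> bool" where
  "linear_extension P le xs \<longleftrightarrow> distinct xs \<and> set xs = P
     \<and> (\<forall>i<length xs. \<forall>j<length xs. le (xs ! i) (xs ! j) \<longrightarrow> i \<le> j)"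

definition pl_rowmotion :: "'a set \<Rightarrow> ('a \<Rightarrow> 'a \<Rightarrow> bool) \<Rightarrow> 'a list \<Rightarrow> ('a \<Rightarrow> real) \<Rightarrow> ('a \<Rightarrow> real)" where
  "pl_rowmotion P le xs f = foldr (toggle P le) xs f"

definition alpha1 :: "('a \<Rightarrow> real) \<Rightarrow> ('a \<Rightarrow> real)" where
  "alpha1 h = (\<lambda>x. 1 - h x)"

definition alpha2 :: "'a set \<Rightarrow> ('a \<Rightarrow> 'a \<Rightarrow> bool) \<Rightarrow> ('a \<Rightarrow> real) \<Rightarrow> ('a \<Rightarrow> real)" where
  "alpha2 P le f = (\<lambda>x. Min {hatf f (El x) - hatf f y | y. hat_cov P le y (El x)})"

definition sat_chains_to_top :: "'a set \<Rightarrow> ('a \<Rightarrow> 'a \<Rightarrow> bool) \<Rightarrow> 'a \<Rightarrow> 'a list set" where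
  "sat_chains_to_top P le x = {ys. ys \<noteq> [] \<and> hd ys = x \<and> set ys \<subseteq> P
      \<and> (\<forall>i. Suc i < length ys \<longrightarrow> hat_cov P le (El (ys ! i)) (El (ys ! Suc i)))
      \<and> hat_cov P le (El (last ys)) One}"

definition alpha3 :: "'a set \<Rightarrow> ('a \<Rightarrow> 'a \<Rightarrow> bool) \<Rightarrow> ('a \<Rightarrow> real) \<Rightarrow> ('a \<Rightarrow> real)" where
  "alpha3 P le g = (\<lambda>x. Max {sum_list (map g ys) | ys. ys \<in> sat_chains_to_top P le x})"

end

theory Submission
  imports Defs
begin

lemma hat_set_simps[simp]:
  "Zero \<in> hat_set P" "One \<in> hat_set P" "El x \<in> hat_set P \<longleftrightarrow> x \<in> P"
  by (auto simp: hat_set_def)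

lemma finite_hat_set: "finite P \<Longrightarrow> finite (hat_set P)"
  by (simp add: hat_set_def)

lemma Min_minus:
  fixes h :: "'b \<Rightarrow> real"
  assumes "finite Y" "Y \<noteq> {}"
  shows "Min ((\<lambda>y. c - h y) ` Y) = c - Max (h ` Y)"
proof (rule Min_eqI)
  show "finite ((\<lambda>y. c - h y) ` Y)" using assms by simp
next
  fix z assume "z \<in> (\<lambda>y. c - h y) ` Y"
  then obtain y where "y \<in> Y" "z = c - h y" by auto
  moreover have "h y \<le> Max (h ` Y)" using assms \<open>y\<in>Y\<close> by simp
  ultimately show "c - Max (h ` Y) \<le> z" by simp
next
  have "Max (h ` Y) \<in> h ` Y" using assms by (intro Max_in) auto
  then show "c - Max (h ` Y) \<in> (\<lambda>y. c - h y) ` Y" by auto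
qed

lemma Max_minus:
  fixes h :: "'b \<Rightarrow> real"
  assumes "finite Y" "Y \<noteq> {}"
  shows "Max ((\<lambda>y. c - h y) ` Y) = c - Min (h ` Y)"
proof (rule Max_eqI)
  show "finite ((\<lambda>y. c - h y) ` Y)" using assms by simp
next
  fix z assume "z \<in> (\<lambda>y. c - h y) ` Y"
  then obtain y where "y \<in> Y" "z = c - h y" by auto
  moreover have "Min (h ` Y) \<le> h y" using assms \<open>y\<in>Y\<close> by simp
  ultimately show "z \<le> c - Min (h ` Y)" by simp
next
  have "Min (h ` Y) \<in> h ` Y" using assms by (intro Min_in) auto
  then show "c - Min (h ` Y) \<in> (\<lambda>y. c - h y) ` Y" by auto
qed

fun hz :: "('a \<Rightarrow> real) \<Rightarrow> 'a hatp \<Rightarrow> real" where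
  "hz A (El z) = A z"
| "hz A Zero = 0"
| "hz A One = 0"

lemma foldr_toggle_other:
  "y \<notin> set ys \<Longrightarrow> foldr (toggle P le) ys h y = h y"
  by (induction ys) (auto simp: toggle_def)

lemma all_Suc_split: "(\<forall>i::nat. Q i) \<longleftrightarrow> Q 0 \<and> (\<forall>i. Q (Suc i))"
  by (metis not0_implies_Suc)

lemma S_single: "[y] \<in> sat_chains_to_top P le x \<longleftrightarrow> y = x \<and> x \<in> P \<and> hat_cov P le (El x) One"
  by (auto simp: sat_chains_to_top_def)

lemma S_cons2: "y # z # zs \<in> sat_chains_to_top P le x \<longleftrightarrow>
   y = x \<and> x \<in> P \<and> hat_cov P le (El x) (El z) \<and> z # zs \<in> sat_chains_to_top P le z"
  unfolding sat_chains_to_top_def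
  apply (subst all_Suc_split)
  apply auto
  done

lemma S_hd: "ys \<in> sat_chains_to_top P le z \<Longrightarrow> \<exists>zs. ys = z # zs"
  by (cases ys) (auto simp: sat_chains_to_top_def)

lemma compr_img: "{h y | y. Q y} = h ` {y. Q y}" by auto

locale fposet =
  fixes P :: "'a set" and le :: "'a \<Rightarrow> 'a \<Rightarrow> bool"
  assumes fp: "finite_poset P le"
begin

abbreviation "H \<equiv> hat_set P"

lemma finP: "finite P" using fp by (simp add: finite_poset_def)
lemma refl: "x \<in> P \<Longrightarrow> le x x" using fp by (simp add: finite_poset_def)
lemma antisym: "x \<in> P \<Longrightarrow> y \<in> P \<Longrightarrow> le x y \<Longrightarrow> le y x \<Longrightarrow> x = y"
  using fp unfolding finite_poset_def by blast
lemma trans: "x \<in> P \<Longrightarrow> y \<in> P \<Longrightarrow> z \<in> P \<Longrightarrow> le x y \<Longrightarrow> le y z \<Longrightarrow> le x z"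
  using fp unfolding finite_poset_def by blast

lemma finH: "finite H" using finP by (rule finite_hat_set)

lemma hle_refl: "a \<in> H \<Longrightarrow> hat_le le a a"
  by (cases a) (auto simp: refl)
lemma hle_trans: "a \<in> H \<Longrightarrow> b \<in> H \<Longrightarrow> c \<in> H \<Longrightarrow> hat_le le a b \<Longrightarrow> hat_le le b c \<Longrightarrow> hat_le le a c"
  by (cases a; cases b; cases c) (auto intro: trans)
lemma hle_antisym: "a \<in> H \<Longrightarrow> b \<in> H \<Longrightarrow> hat_le le a b \<Longrightarrow> hat_le le b a \<Longrightarrow> a = b"
  by (cases a; cases b) (auto intro: antisym)
lemma hlt_trans: "a \<in> H \<Longrightarrow> b \<in> H \<Longrightarrow> c \<in> H \<Longrightarrow> hat_lt le a b \<Longrightarrow> hat_lt le b c \<Longrightarrow> hat_lt le a c"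
  unfolding hat_lt_def by (metis hle_trans hle_antisym)

lemma ex_minimal:
  assumes "finite S" "S \<noteq> {}" "S \<subseteq> H"
  shows "\<exists>m\<in>S. \<forall>d\<in>S. \<not> hat_lt le d m"
  using assms
proof (induction S rule: finite_ne_induct)
  case (singleton x) then show ?case by (auto simp: hat_lt_def)
next
  case (insert x S)
  then obtain m where m: "m \<in> S" "\<forall>d\<in>S. \<not> hat_lt le d m" by auto
  show ?case
  proof (cases "hat_lt le x m")
    case True
    have "\<forall>d\<in>insert x S. \<not> hat_lt le d x"
    proof
      fix d assume d: "d \<in> insert x S"
      show "\<not> hat_lt le d x"
      proof
        assume dx: "hat_lt le d x"
        then have "d \<noteq> x" by (auto simp: hat_lt_def)
        with d have "d \<in> S" by auto
        have HH: "d \<in> H" "x \<in> H" "m \<in> H" using insert.prems \<open>d \<in> S\<close> m(1) by auto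
        have "hat_lt le d m" by (rule hlt_trans[OF HH dx True])
        with \<open>d \<in> S\<close> m show False by blast
      qed
    qed
    then show ?thesis by auto
  next
    case False then show ?thesis using m by auto
  qed
qed

lemma ex_maximal:
  assumes "finite S" "S \<noteq> {}" "S \<subseteq> H"
  shows "\<exists>m\<in>S. \<forall>d\<in>S. \<not> hat_lt le m d"
  using assms
proof (induction S rule: finite_ne_induct)
  case (singleton x) then show ?case by (auto simp: hat_lt_def)
next
  case (insert x S)
  then obtain m where m: "m \<in> S" "\<forall>d\<in>S. \<not> hat_lt le m d" by auto
  show ?case
  proof (cases "hat_lt le m x")
    case True
    have "\<forall>d\<in>insert x S. \<not> hat_lt le x d"
    proof
      fix d assume d: "d \<in> insert x S"
      show "\<not> hat_lt le x d"
      proof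
        assume dx: "hat_lt le x d"
        then have "d \<noteq> x" by (auto simp: hat_lt_def)
        with d have "d \<in> S" by auto
        have HH: "m \<in> H" "x \<in> H" "d \<in> H" using insert.prems \<open>d \<in> S\<close> m(1) by auto
        have "hat_lt le m d" by (rule hlt_trans[OF HH True dx])
        with \<open>d \<in> S\<close> m show False by blast
      qed
    qed
    then show ?thesis by auto
  next
    case False then show ?thesis using m by auto
  qed
qed

lemma cover_up:
  assumes "a \<in> H" "b \<in> H" "hat_lt le a b"
  shows "\<exists>c. hat_cov P le a c \<and> hat_le le c b"
proof -
  let ?S = "{c\<in>H. hat_lt le a c \<and> hat_le le c b}"
  have "b \<in> ?S" using assms hle_refl by auto
  moreover have "finite ?S" using finH by auto
  ultimately obtain m where m: "m \<in> ?S" "\<forall>d\<in>?S. \<not> hat_lt le d m"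
    using ex_minimal[of ?S] by blast
  have "hat_cov P le a m"
    unfolding hat_cov_def
  proof (intro conjI)
    show "\<not> (\<exists>z\<in>H. hat_lt le a z \<and> hat_lt le z m)"
    proof
      assume "\<exists>z\<in>H. hat_lt le a z \<and> hat_lt le z m"
      then obtain z where z: "z \<in> H" "hat_lt le a z" "hat_lt le z m" by blast
      then have "hat_le le z b" using m(1) hle_trans[of z m b] assms unfolding hat_lt_def by blast
      with z m(2) show False by blast
    qed
  qed (use assms m in auto)
  then show ?thesis using m by blast
qed

lemma cover_down:
  assumes "a \<in> H" "b \<in> H" "hat_lt le a b"
  shows "\<exists>c. hat_le le a c \<and> hat_cov P le c b"
proof -
  let ?S = "{c\<in>H. hat_le le a c \<and> hat_lt le c b}"
  have "a \<in> ?S" using assms hle_refl by auto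
  moreover have "finite ?S" using finH by auto
  ultimately obtain m where m: "m \<in> ?S" "\<forall>d\<in>?S. \<not> hat_lt le m d"
    using ex_maximal[of ?S] by blast
  have "hat_cov P le m b"
    unfolding hat_cov_def
  proof (intro conjI)
    show "\<not> (\<exists>z\<in>H. hat_lt le m z \<and> hat_lt le z b)"
    proof
      assume "\<exists>z\<in>H. hat_lt le m z \<and> hat_lt le z b"
      then obtain z where z: "z \<in> H" "hat_lt le m z" "hat_lt le z b" by blast
      then have "hat_le le a z" using m(1) hle_trans[of a m z] assms unfolding hat_lt_def by blast
      with z m(2) show False by blast
    qed
  qed (use assms m in auto)
  then show ?thesis using m by blast
qed

lemma cov_H: "hat_cov P le a b \<Longrightarrow> a \<in> H \<and> b \<in> H \<and> hat_lt le a b"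
  by (simp add: hat_cov_def)

definition "L x = {y. hat_cov P le y (El x)}"
definition "U x = {z. hat_cov P le (El x) z}"

lemma finite_L: "finite (L x)"
  by (rule finite_subset[OF _ finH]) (auto simp: L_def hat_cov_def)
lemma finite_U: "finite (U x)"
  by (rule finite_subset[OF _ finH]) (auto simp: U_def hat_cov_def)
lemma L_ne: "x \<in> P \<Longrightarrow> L x \<noteq> {}"
  using cover_down[of Zero "El x"] by (auto simp: L_def hat_lt_def)
lemma U_ne: "x \<in> P \<Longrightarrow> U x \<noteq> {}"
  using cover_up[of "El x" One] by (auto simp: U_def hat_lt_def)

definition "up x = {y\<in>P. le x y}"

lemma up_induct[consumes 1, case_names step]:
  assumes "x \<in> P"
  assumes step: "\<And>x. x \<in> P \<Longrightarrow> (\<And>z. hat_cov P le (El x) (El z) \<Longrightarrow> Q z) \<Longrightarrow> Q x"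
  shows "Q x"
  using assms(1)
proof (induction "card (up x)" arbitrary: x rule: less_induct)
  case less
  show ?case
  proof (rule step[OF less.prems])
    fix z assume c: "hat_cov P le (El x) (El z)"
    then have zP: "z \<in> P" and lxz: "le x z" and ne: "x \<noteq> z"
      by (auto simp: hat_cov_def hat_lt_def)
    have "up z \<subset> up x"
    proof
      show "up z \<subseteq> up x" using less.prems zP lxz by (auto simp: up_def intro: trans)
      show "up z \<noteq> up x"
      proof
        assume "up z = up x"
        then have "x \<in> up z" using less.prems refl by (auto simp: up_def)
        then show False using antisym[of x z] less.prems zP lxz ne by (auto simp: up_def)
      qed
    qed
    then have "card (up z) < card (up x)"
      by (rule psubset_card_mono[rotated]) (use finP in \<open>auto simp: up_def\<close>)
    then show "Q z" using less.hyps zP by blast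
  qed
qed

lemma chain_max:
  assumes "finite C" "C \<noteq> {}" "C \<subseteq> P" "is_chain le C"
  shows "\<exists>m\<in>C. \<forall>c\<in>C. le c m"
  using assms
proof (induction C rule: finite_ne_induct)
  case (singleton x) then show ?case by (auto simp: refl)
next
  case (insert x C)
  then have "is_chain le C" by (auto simp: is_chain_def)
  with insert obtain m where m: "m \<in> C" "\<forall>c\<in>C. le c m" by auto
  show ?case
  proof (cases "le x m")
    case True then show ?thesis using m by auto
  next
    case False
    then have "le m x" using insert.prems m(1) by (auto simp: is_chain_def)
    then show ?thesis using m insert.prems by (auto intro: trans refl)
  qed
qed


abbreviation "S x \<equiv> sat_chains_to_top P le x"

lemma S_props:
  "ys \<in> S x \<Longrightarrow> distinct ys \<and> set ys \<subseteq> P \<and> (\<forall>y\<in>set ys. le x y) \<and> is_chain le (set ys) \<and> x \<in> P"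
proof (induction ys arbitrary: x)
  case Nil then show ?case by (simp add: sat_chains_to_top_def)
next
  case (Cons y zs)
  show ?case
  proof (cases zs)
    case Nil with Cons.prems show ?thesis by (auto simp: S_single is_chain_def refl)
  next
    case (Cons z zs')
    with Cons.prems have h: "y = x" "x \<in> P" "hat_cov P le (El x) (El z)" "zs \<in> S z"
      by (auto simp: S_cons2)
    with Cons.IH have ih: "distinct zs" "set zs \<subseteq> P" "\<forall>w\<in>set zs. le z w" "is_chain le (set zs)" "z \<in> P"
      by auto
    from h(3) have lxz: "le x z" and ne: "x \<noteq> z" by (auto simp: hat_cov_def hat_lt_def)
    have all: "\<forall>w\<in>set zs. le x w" using ih lxz h(2) by (auto intro: trans)
    have nin: "x \<notin> set zs"
    proof
      assume "x \<in> set zs"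
      then have "le z x" using ih by auto
      then show False using antisym[of x z] lxz ne h(2) ih(5) by auto
    qed
    have ch: "is_chain le (set (y # zs))"
      using ih(4) all h(1,2) refl unfolding is_chain_def by auto
    have "distinct (y # zs)" using nin h(1) ih(1) by simp
    moreover have "set (y # zs) \<subseteq> P" using h(1,2) ih(2) by simp
    moreover have "\<forall>w\<in>set (y # zs). le x w" using all h(1,2) refl by simp
    ultimately show ?thesis using ch h(2) by blast
  qed
qed

lemma finite_S: "finite (S x)"
proof (rule finite_subset)
  show "S x \<subseteq> {ys. set ys \<subseteq> P \<and> length ys \<le> card P}"
  proof
    fix ys assume "ys \<in> S x"
    then have "distinct ys" "set ys \<subseteq> P" using S_props by auto
    moreover have "length ys = card (set ys)" using \<open>distinct ys\<close> by (simp add: distinct_card)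
    moreover have "card (set ys) \<le> card P" using card_mono[OF finP \<open>set ys \<subseteq> P\<close>] .
    ultimately show "ys \<in> {ys. set ys \<subseteq> P \<and> length ys \<le> card P}" by simp
  qed
  show "finite {ys. set ys \<subseteq> P \<and> length ys \<le> card P}"
    by (rule finite_lists_length_le[OF finP])
qed

lemma S_ne: "x \<in> P \<Longrightarrow> S x \<noteq> {}"
proof (induction x rule: up_induct)
  case (step x)
  show ?case
  proof (cases "hat_cov P le (El x) One")
    case True then have "[x] \<in> S x" using step(1) by (simp add: S_single)
    then show ?thesis by blast
  next
    case False
    obtain c where c: "hat_cov P le (El x) c"
      using cover_up[of "El x" One] step(1) by (auto simp: hat_lt_def)
    then obtain z where z: "c = El z"
      using False by (cases c) (auto simp: hat_cov_def hat_lt_def)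
    with c have zP: "z \<in> P" by (auto simp: hat_cov_def)
    have "S z \<noteq> {}" using step(2)[of z] c z by simp
    then obtain zs where zs: "zs \<in> S z" by blast
    then obtain zs' where zs': "zs = z # zs'" using S_hd[OF zs] by blast
    have "x # z # zs' \<in> S x" using step(1) c z zs zs' by (simp only: S_cons2)
    then show ?thesis by blast
  qed
qed

definition "V g x = (\<lambda>ys. sum_list (map g ys)) ` S x"

lemma alpha3_V: "alpha3 P le g x = Max (V g x)"
  by (simp add: alpha3_def V_def Setcompr_eq_image)

lemma finite_V: "finite (V g x)" by (simp add: V_def finite_S)
lemma V_ne: "x \<in> P \<Longrightarrow> V g x \<noteq> {}" by (simp add: V_def S_ne)

lemma A_rec:
  assumes xP: "x \<in> P"
  shows "alpha3 P le g x = g x + Max (hz (alpha3 P le g) ` U x)"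
proof -
  let ?A = "alpha3 P le g"
  let ?M = "Max (hz ?A ` U x)"
  have fin: "finite (hz ?A ` U x)" by (simp add: finite_U)
  have ne: "hz ?A ` U x \<noteq> {}" using U_ne xP by simp
  have "Max (V g x) = g x + ?M"
  proof (rule Max_eqI[OF finite_V])
    fix v assume "v \<in> V g x"
    then obtain ys where ys: "ys \<in> S x" "v = sum_list (map g ys)" by (auto simp: V_def)
    then obtain zs where zs: "ys = x # zs" using S_hd[OF ys(1)] by blast
    show "v \<le> g x + ?M"
    proof (cases zs)
      case Nil
      then have "One \<in> U x" using ys zs by (simp add: S_single U_def)
      then have "hz ?A One \<in> hz ?A ` U x" by (rule imageI)
      then have "hz ?A One \<le> ?M" using fin by (intro Max_ge)
      then show ?thesis using ys zs Nil by simp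
    next
      case (Cons z zs')
      then have h: "hat_cov P le (El x) (El z)" "zs \<in> S z" using ys zs by (auto simp: S_cons2)
      then have "El z \<in> U x" by (simp add: U_def)
      then have "hz ?A (El z) \<in> hz ?A ` U x" by (rule imageI)
      then have "hz ?A (El z) \<le> ?M" using fin by (intro Max_ge)
      moreover have "sum_list (map g zs) \<le> ?A z"
        unfolding alpha3_V using h(2) finite_V by (intro Max_ge) (auto simp: V_def)
      ultimately show ?thesis using ys zs by simp
    qed
  next
    have "?M \<in> hz ?A ` U x" using fin ne by (rule Max_in)
    then obtain c where c: "c \<in> U x" "?M = hz ?A c" by auto
    show "g x + ?M \<in> V g x"
    proof (cases c)
      case Zero then show ?thesis using c by (simp add: U_def hat_cov_def hat_lt_def)
    next
      case One
      then have "[x] \<in> S x" using c xP by (simp add: S_single U_def)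
      then show ?thesis using c One by (force simp: V_def)
    next
      case (El z)
      then have h: "hat_cov P le (El x) (El z)" using c by (simp add: U_def)
      then have zP: "z \<in> P" by (simp add: hat_cov_def)
      have "?A z \<in> V g z" unfolding alpha3_V using finite_V V_ne[OF zP] by (rule Max_in)
      then obtain zs where zs: "zs \<in> S z" "?A z = sum_list (map g zs)" by (auto simp: V_def)
      then obtain zs' where "zs = z # zs'" using S_hd[OF zs(1)] by blast
      then have "x # zs \<in> S x" using zs h xP by (simp add: S_cons2)
      moreover have "g x + ?M = sum_list (map g (x # zs))" using c El zs by simp
      ultimately show ?thesis unfolding V_def by blast
    qed
  qed
  then show ?thesis by (simp add: alpha3_V)
qed

lemma A_antimono:
  assumes g0: "\<forall>x\<in>P. 0 \<le> g x"
  shows "x \<in> P \<Longrightarrow> \<forall>y\<in>P. le x y \<longrightarrow> alpha3 P le g y \<le> alpha3 P le g x"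
proof (induction x rule: up_induct)
  case (step x)
  show ?case
  proof (intro ballI impI)
    fix y assume yP: "y \<in> P" and lxy: "le x y"
    show "alpha3 P le g y \<le> alpha3 P le g x"
    proof (cases "x = y")
      case True then show ?thesis by simp
    next
      case False
      then have "hat_lt le (El x) (El y)" using lxy by (simp add: hat_lt_def)
      then obtain c where c: "hat_cov P le (El x) c" "hat_le le c (El y)"
        using cover_up[of "El x" "El y"] step yP by auto
      then obtain z where z: "c = El z" by (cases c) (auto simp: hat_cov_def hat_lt_def)
      with c have zP: "z \<in> P" and lzy: "le z y" by (auto simp: hat_cov_def)
      have "alpha3 P le g y \<le> alpha3 P le g z" using step(2)[of z] c z zP yP lzy by auto
      also have "\<dots> = hz (alpha3 P le g) c" using z by simp
      also have "\<dots> \<le> Max (hz (alpha3 P le g) ` U x)"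
        using c(1) finite_U by (intro Max_ge) (auto simp: U_def)
      also have "\<dots> \<le> alpha3 P le g x" using A_rec[OF step(1)] g0 step(1) by simp
      finally show ?thesis .
    qed
  qed
qed

end


locale fpf = fposet +
  fixes f :: "'a \<Rightarrow> real" and xs :: "'a list"
  assumes fO: "f \<in> order_polytope P le"
    and lin: "linear_extension P le xs"
begin

lemma f01: "x \<in> P \<Longrightarrow> 0 \<le> f x \<and> f x \<le> 1"
  using fO by (simp add: order_polytope_def)
lemma fmono: "x \<in> P \<Longrightarrow> y \<in> P \<Longrightarrow> le x y \<Longrightarrow> f x \<le> f y"
  using fO by (simp add: order_polytope_def)

lemma hatf_mono: "a \<in> H \<Longrightarrow> b \<in> H \<Longrightarrow> hat_le le a b \<Longrightarrow> hatf f a \<le> hatf f b"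
  by (cases a; cases b) (auto simp: f01 fmono)
lemma hatf01: "a \<in> H \<Longrightarrow> 0 \<le> hatf f a \<and> hatf f a \<le> 1"
  by (cases a) (auto simp: f01)

abbreviation "g \<equiv> alpha2 P le f"

lemma g_eq: "g x = f x - Max (hatf f ` L x)" if xP: "x \<in> P"
proof -
  have "g x = Min ((\<lambda>y. f x - hatf f y) ` L x)"
    by (simp add: alpha2_def L_def compr_img)
  also have "\<dots> = f x - Max (hatf f ` L x)"
    using finite_L L_ne[OF xP] by (rule Min_minus)
  finally show ?thesis .
qed

lemma g_le: "x \<in> P \<Longrightarrow> y \<in> L x \<Longrightarrow> g x \<le> f x - hatf f y"
  using g_eq[of x] finite_L[of x] by (simp add: Max_ge)

lemma g0: "x \<in> P \<Longrightarrow> 0 \<le> g x"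
proof -
  assume xP: "x \<in> P"
  have "Max (hatf f ` L x) \<le> f x"
  proof (rule Max.boundedI)
    show "finite (hatf f ` L x)" using finite_L by simp
    show "hatf f ` L x \<noteq> {}" using L_ne[OF xP] by simp
    fix a assume "a \<in> hatf f ` L x"
    then obtain y where y: "y \<in> L x" "a = hatf f y" by auto
    then have "y \<in> H" "hat_le le y (El x)" by (auto simp: L_def hat_cov_def hat_lt_def)
    then show "a \<le> f x" using hatf_mono[of y "El x"] xP y(2) by simp
  qed
  then show ?thesis using g_eq[OF xP] by simp
qed

lemma chain_sum:
  assumes "C \<subseteq> P" "is_chain le C" "T \<in> H" "\<forall>c\<in>C. hat_le le (El c) T"
  shows "sum g C \<le> hatf f T"
  using assms
proof (induction "card C" arbitrary: C T rule: less_induct)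
  case less
  have finC: "finite C" using less.prems(1) finP finite_subset by blast
  show ?case
  proof (cases "C = {}")
    case True then show ?thesis using hatf01[OF less.prems(3)] by simp
  next
    case False
    obtain m where m: "m \<in> C" "\<forall>c\<in>C. le c m"
      using chain_max[OF finC False less.prems(1,2)] by blast
    have mP: "m \<in> P" using m less.prems(1) by auto
    let ?C' = "C - {m}"
    have C'P: "?C' \<subseteq> P" and ch': "is_chain le ?C'"
      using less.prems(1,2) by (auto simp: is_chain_def)
    obtain y where y: "hat_cov P le y (El m)" "\<forall>c\<in>?C'. hat_le le (El c) y"
    proof (cases "?C' = {}")
      case True
      obtain y where "hat_le le Zero y" "hat_cov P le y (El m)"
        using cover_down[of Zero "El m"] mP by (auto simp: hat_lt_def)
      then show ?thesis using that True by blast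
    next
      case False
      obtain m' where m': "m' \<in> ?C'" "\<forall>c\<in>?C'. le c m'"
        using chain_max[OF _ False C'P ch'] finC by blast
      have m'P: "m' \<in> P" using m' less.prems(1) by auto
      have "le m' m" "m' \<noteq> m" using m m' by auto
      then have "hat_lt le (El m') (El m)" by (simp add: hat_lt_def)
      then obtain y where y: "hat_le le (El m') y" "hat_cov P le y (El m)"
        using cover_down[of "El m'" "El m"] mP m'P by auto
      have yH: "y \<in> H" using y(2) by (simp add: hat_cov_def)
      have "\<forall>c\<in>?C'. hat_le le (El c) y"
      proof
        fix c assume c: "c \<in> ?C'"
        then have "hat_le le (El c) (El m')" using m' by simp
        moreover have "El c \<in> H" using c less.prems(1) by auto
        ultimately show "hat_le le (El c) y" using hle_trans[of "El c" "El m'" y] yH m'P y(1) by simp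
      qed
      then show ?thesis using that y(2) by blast
    qed
    have yH: "y \<in> H" using y(1) by (simp add: hat_cov_def)
    have "card C > 0" using finC m(1) card_gt_0_iff by blast
    then have "card ?C' < card C" using finC m(1) by simp
    then have ih: "sum g ?C' \<le> hatf f y" using less.hyps C'P ch' yH y(2) by blast
    have gm: "g m \<le> f m - hatf f y" using g_le[OF mP] y(1) by (simp add: L_def)
    have "sum g C = g m + sum g ?C'" using finC m(1) by (simp add: sum.remove)
    also have "\<dots> \<le> f m" using ih gm by simp
    also have "\<dots> \<le> hatf f T"
      using hatf_mono[of "El m" T] less.prems(3,4) m(1) mP by simp
    finally show ?thesis .
  qed
qed

lemma g_chain: "g \<in> chain_polytope P le"
proof -
  have "sum g C \<le> 1" if "C \<subseteq> P" "is_chain le C" for C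
    using chain_sum[OF that, of One] by simp
  moreover have "g x \<le> 1" if "x \<in> P" for x
    using chain_sum[of "{x}" One] that refl by (simp add: is_chain_def)
  ultimately show ?thesis using g0 by (simp add: chain_polytope_def)
qed

abbreviation "A \<equiv> alpha3 P le g"

lemma A01: "x \<in> P \<Longrightarrow> 0 \<le> A x \<and> A x \<le> 1"
proof -
  assume xP: "x \<in> P"
  have bnd: "0 \<le> v \<and> v \<le> 1" if "v \<in> V g x" for v
  proof -
    obtain ys where ys: "ys \<in> S x" "v = sum_list (map g ys)" using \<open>v \<in> V g x\<close> by (auto simp: V_def)
    then have props: "distinct ys" "set ys \<subseteq> P" "is_chain le (set ys)" using S_props by auto
    then have "v = sum g (set ys)" using ys(2) by (simp add: sum.distinct_set_conv_list)
    moreover have "sum g (set ys) \<le> 1" using chain_sum[OF props(2,3), of One] by simp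
    moreover have "0 \<le> sum g (set ys)" using g0 props(2) by (intro sum_nonneg) auto
    ultimately show ?thesis by simp
  qed
  have "A x \<in> V g x" unfolding alpha3_V using finite_V V_ne[OF xP] by (rule Max_in)
  then show ?thesis using bnd by blast
qed

lemma A_rev: "A \<in> rev_order_polytope P le"
  using A01 A_antimono[of g] g0 by (auto simp: rev_order_polytope_def)

abbreviation "R \<equiv> pl_rowmotion P le xs f"

lemma dist: "distinct xs" and setxs: "set xs = P"
  and lx: "\<And>i j. i < length xs \<Longrightarrow> j < length xs \<Longrightarrow> le (xs ! i) (xs ! j) \<Longrightarrow> i \<le> j"
  using lin by (auto simp: linear_extension_def)

lemma notin_drop: "j < length xs \<Longrightarrow> j < k \<Longrightarrow> xs ! j \<notin> set (drop k xs)"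
  using dist by (auto simp: in_set_conv_nth nth_eq_iff_index_eq)

lemma notin_take: "j < length xs \<Longrightarrow> k \<le> j \<Longrightarrow> xs ! j \<notin> set (take k xs)"
  using dist by (auto simp: in_set_conv_nth nth_eq_iff_index_eq)

lemma R_step:
  assumes i: "i < length xs"
  defines "x \<equiv> xs ! i"
  shows "R x = Max (hatf f ` L x) + Min (hatf R ` U x) - f x"
proof -
  let ?F = "foldr (toggle P le) (drop (Suc i) xs) f"
  have xP: "x \<in> P" using i setxs x_def by auto
  have R1: "R = foldr (toggle P le) (take (Suc i) xs) ?F"
    unfolding pl_rowmotion_def by (metis append_take_drop_id foldr_append comp_apply)
  have tk: "take (Suc i) xs = take i xs @ [x]" using i x_def by (simp add: take_Suc_conv_app_nth)
  have R2: "R = foldr (toggle P le) (take i xs) (toggle P le x ?F)"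
    using R1 tk by simp
  have "R x = toggle P le x ?F x"
    unfolding R2 by (rule foldr_toggle_other) (use notin_take[OF i, of i] x_def in simp)
  also have "\<dots> = Max (hatf ?F ` L x) + Min (hatf ?F ` U x) - ?F x"
    by (simp add: toggle_def L_def U_def compr_img)
  also have "?F x = f x"
    by (rule foldr_toggle_other) (use notin_drop[OF i, of "Suc i"] x_def in simp)
  also have "hatf ?F ` L x = hatf f ` L x"
  proof (rule image_cong[OF HOL.refl])
    fix y assume y: "y \<in> L x"
    show "hatf ?F y = hatf f y"
    proof (cases y)
      case (El y0)
      then have y0P: "y0 \<in> P" and ly: "le y0 x" and ne: "y0 \<noteq> x"
        using y by (auto simp: L_def hat_cov_def hat_lt_def)
      obtain j where j: "j < length xs" "xs ! j = y0" using y0P setxs by (metis in_set_conv_nth)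
      have "j \<le> i" using lx[OF j(1) i] ly j x_def by simp
      moreover have "j \<noteq> i" using ne j x_def by auto
      ultimately have "y0 \<notin> set (drop (Suc i) xs)" using notin_drop[OF j(1), of "Suc i"] j by simp
      then show ?thesis using El by (simp add: foldr_toggle_other)
    qed simp_all
  qed
  also have "hatf ?F ` U x = hatf R ` U x"
  proof (rule image_cong[OF HOL.refl])
    fix z assume z: "z \<in> U x"
    show "hatf ?F z = hatf R z"
    proof (cases z)
      case (El z0)
      then have z0P: "z0 \<in> P" and lz: "le x z0" and ne: "z0 \<noteq> x"
        using z by (auto simp: U_def hat_cov_def hat_lt_def)
      obtain j where j: "j < length xs" "xs ! j = z0" using z0P setxs by (metis in_set_conv_nth)
      have "i \<le> j" using lx[OF i j(1)] lz j x_def by simp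
      moreover have "j \<noteq> i" using ne j x_def by auto
      ultimately have "z0 \<notin> set (take (Suc i) xs)" using notin_take[OF j(1), of "Suc i"] j by simp
      then show ?thesis using El R1 by (simp add: foldr_toggle_other)
    qed simp_all
  qed
  finally show ?thesis .
qed

lemma main_id: "x \<in> P \<Longrightarrow> R x = 1 - A x"
proof (induction x rule: up_induct)
  case (step x)
  obtain i where i: "i < length xs" "xs ! i = x" using step(1) setxs by (metis in_set_conv_nth)
  have Rx: "R x = Max (hatf f ` L x) + Min (hatf R ` U x) - f x"
    using R_step[OF i(1)] i(2) by simp
  have "hz A ` U x = (\<lambda>z. 1 - hatf R z) ` U x"
  proof (rule image_cong[OF HOL.refl])
    fix z assume z: "z \<in> U x"
    show "hz A z = 1 - hatf R z"
    proof (cases z)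
      case Zero then show ?thesis using z by (simp add: U_def hat_cov_def hat_lt_def)
    next
      case One then show ?thesis by simp
    next
      case (El z0)
      then have "hat_cov P le (El x) (El z0)" using z by (simp add: U_def)
      then have "R z0 = 1 - A z0" by (rule step(2))
      then show ?thesis using El by simp
    qed
  qed
  then have "Max (hz A ` U x) = 1 - Min (hatf R ` U x)"
    using Max_minus[OF finite_U U_ne[OF step(1)]] by simp
  then have "A x = (f x - Max (hatf f ` L x)) + (1 - Min (hatf R ` U x))"
    using A_rec[OF step(1), of g] g_eq[OF step(1)] by simp
  then show ?case using Rx by simp
qed

end


theorem theorem2:
  fixes P :: "'a set" and le :: "'a \<Rightarrow> 'a \<Rightarrow> bool" and f :: "'a \<Rightarrow> real"
    and xs :: "'a list"
  assumes "finite_poset P le"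
    and "linear_extension P le xs"
    and "f \<in> order_polytope P le"
  shows "alpha2 P le f \<in> chain_polytope P le
       \<and> alpha3 P le (alpha2 P le f) \<in> rev_order_polytope P le
       \<and> (\<forall>x\<in>P. pl_rowmotion P le xs f x = alpha1 (alpha3 P le (alpha2 P le f)) x)"
proof -
  interpret fpf P le f xs
    using assms by (unfold_locales) auto
  show ?thesis using g_chain A_rev main_id by (simp add: alpha1_def)
qed

end
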